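(* Let $L$ be a non-torsion degree-zero line bundle on a complex elliptic curve $E$, equipped with a flat hermitian metric, and for $r\in\mathbb R_{>0}\sqcup\{\infty\}$ let $W_r\subset\operatorname{Tot}(L)$ be the open subset of vectors of length less than $r$ (so $W_\infty=\operatorname{Tot}(L)$). Let $r,R\in\mathbb R_{>0}\sqcup\{\infty\}$ and let $j:W_r\to W_R$ be a holomorphic open embedding which restricts to the identity on the zero section $E$. Then $j$ is fiberwise multiplication by a constant $c\in\mathbb C^*$ with $|c|\le R/r$.
   Context: A degree-zero line bundle on an elliptic curve admits a hermitian metric whose Chern connection is flat (the bundle is given by a unitary character of $\pi_1(E)$); lengths of vectors are measured with respect to such a metric. The zero section of $\operatorname{Tot}(L)$ is identified with $E$. *)

theory Defs
  imports "HOL-Analysis.Analysis"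
begin

text \<open>Model: E = C / Lambda with Lambda = Z w1 + Z w2 (w1, w2 R-linearly independent).
A degree-zero line bundle L with flat hermitian metric is given by a unitary character
chi of Lambda, determined by u1 = chi(w1), u2 = chi(w2) with |u1| = |u2| = 1.
Tot(L) = (C x C) / Lambda, where m w1 + n w2 acts by (z,v) -> (z + m w1 + n w2, u1^m u2^n v);
the length of a vector [(z,v)] is |v|.\<close>

definition lattice_basis :: "complex \<Rightarrow> complex \<Rightarrow> bool" where
  "lattice_basis w1 w2 \<longleftrightarrow> w1 \<noteq> 0 \<and> Im (w2 / w1) \<noteq> 0"

definition tot_rel :: "complex \<Rightarrow> complex \<Rightarrow> complex \<Rightarrow> complex \<Rightarrow>
    complex \<times> complex \<Rightarrow> complex \<times> complex \<Rightarrow> bool" where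
  "tot_rel w1 w2 u1 u2 p q \<longleftrightarrow>
     (\<exists>m n :: int. q = (fst p + of_int m * w1 + of_int n * w2,
                        u1 powi m * u2 powi n * snd p))"

text \<open>Preimage in C x C of W_r (vectors of length < r), r in (0, infinity].\<close>
definition tube :: "ereal \<Rightarrow> (complex \<times> complex) set" where
  "tube r = {p. ereal (cmod (snd p)) < r}"

definition holo2 :: "(complex \<times> complex \<Rightarrow> complex \<times> complex) \<Rightarrow> (complex \<times> complex) set \<Rightarrow> bool" where
  "holo2 f S \<longleftrightarrow> open S \<and> (\<forall>p\<in>S. \<exists>D. (f has_derivative D) (at p) \<and>
       (\<forall>a x y. D (a * x, a * y) = (a * fst (D (x, y)), a * snd (D (x, y)))))"

end

theory Submission
  imports Defs "HOL-Complex_Analysis.Complex_Analysis"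
begin


lemma param_circle_holo:
  fixes \<Phi> :: "complex \<Rightarrow> complex \<Rightarrow> complex" and \<rho> :: real
  assumes cont: "continuous_on (UNIV \<times> sphere 0 \<rho>) (\<lambda>(z,v). \<Phi> z v)"
    and hol: "\<And>v. v \<in> sphere 0 \<rho> \<Longrightarrow> (\<lambda>z. \<Phi> z v) holomorphic_on UNIV"
    and rho: "\<rho> > 0"
  shows "(\<lambda>z. contour_integral (circlepath 0 \<rho>) (\<Phi> z)) holomorphic_on UNIV"
proof -
  let ?g = "circlepath (0::complex) \<rho>"
  have pim: "path_image ?g = sphere 0 \<rho>" using rho by (simp add: path_image_circlepath_nonneg)
  have gin: "?g t \<in> sphere 0 \<rho>" if "t \<in> {0..1}" for t
    using that pim unfolding path_image_def by blast
  have vdc: "continuous_on {0..1} (\<lambda>t. vector_derivative ?g (at t))"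
    by (simp add: vector_derivative_circlepath) (intro continuous_intros)
  have conth: "continuous_on UNIV (\<lambda>z. contour_integral ?g (\<Phi> z))"
  proof -
    have "continuous_on (UNIV \<times> cbox 0 1) (\<lambda>(z, t). \<Phi> z (?g t) * vector_derivative ?g (at t))"
    proof -
      have c0: "continuous_on (UNIV \<times> cbox 0 1) (\<lambda>p::complex\<times>real. (fst p, ?g (snd p)))"
        by (intro continuous_intros continuous_on_compose2[OF path_circlepath[unfolded path_def]])
           (auto simp: cbox_interval)
      have im: "(\<lambda>p::complex\<times>real. (fst p, ?g (snd p))) ` (UNIV \<times> cbox 0 1) \<subseteq> UNIV \<times> sphere 0 \<rho>"
        using gin by (auto simp: cbox_interval)
      have "continuous_on (UNIV \<times> cbox 0 1) ((\<lambda>(z,v). \<Phi> z v) \<circ> (\<lambda>p::complex\<times>real. (fst p, ?g (snd p))))"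
        by (rule continuous_on_compose[OF c0 continuous_on_subset[OF cont im]])
      then have c1: "continuous_on (UNIV \<times> cbox 0 1) (\<lambda>p::complex\<times>real. \<Phi> (fst p) (?g (snd p)))"
        by (simp add: o_def case_prod_unfold)
      have c2: "continuous_on (UNIV \<times> cbox 0 1) (\<lambda>p::complex\<times>real. vector_derivative ?g (at (snd p)))"
        by (rule continuous_on_compose2[OF vdc]) (auto intro!: continuous_intros simp: cbox_interval)
      show ?thesis using continuous_on_mult[OF c1 c2] by (simp add: case_prod_unfold)
    qed
    then show ?thesis
      unfolding contour_integral_integral cbox_interval[symmetric]
      by (rule integral_continuous_on_param)
  qed
  have swap: "contour_integral (linepath a b) (\<lambda>z. contour_integral ?g (\<Phi> z))
      = contour_integral ?g (\<lambda>v. contour_integral (linepath a b) (\<lambda>z. \<Phi> z v))" for a b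
  proof (rule contour_integral_swap)
    show "continuous_on (path_image (linepath a b) \<times> path_image ?g) (\<lambda>(y1, y2). \<Phi> y1 y2)"
      using pim by (auto intro: continuous_on_subset[OF cont])
    show "continuous_on {0..1} (\<lambda>t. vector_derivative (linepath a b) (at t))"
      by (auto intro!: continuous_intros)
  qed (auto simp: vdc)
  have lcont: "continuous_on (sphere 0 \<rho>) (\<lambda>v. contour_integral (linepath a b) (\<lambda>z. \<Phi> z v))" for a b
  proof -
    have "continuous_on (sphere 0 \<rho> \<times> cbox 0 1)
        (\<lambda>(v, t). \<Phi> (linepath a b t) v * vector_derivative (linepath a b) (at t))"
    proof -
      have c0: "continuous_on (sphere 0 \<rho> \<times> cbox 0 1) (\<lambda>p::complex\<times>real. (linepath a b (snd p), fst p))"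
        by (intro continuous_intros continuous_on_compose2[OF path_linepath[unfolded path_def]])
           (auto simp: cbox_interval)
      have im: "(\<lambda>p::complex\<times>real. (linepath a b (snd p), fst p)) ` (sphere 0 \<rho> \<times> cbox 0 1) \<subseteq> UNIV \<times> sphere 0 \<rho>"
        by auto
      have "continuous_on (sphere 0 \<rho> \<times> cbox 0 1) ((\<lambda>(z,v). \<Phi> z v) \<circ> (\<lambda>p::complex\<times>real. (linepath a b (snd p), fst p)))"
        by (rule continuous_on_compose[OF c0 continuous_on_subset[OF cont im]])
      then have c1: "continuous_on (sphere 0 \<rho> \<times> cbox 0 1) (\<lambda>p::complex\<times>real. \<Phi> (linepath a b (snd p)) (fst p))"
        by (simp add: o_def case_prod_unfold)
      have c2: "continuous_on (sphere 0 \<rho> \<times> cbox 0 1) (\<lambda>p::complex\<times>real. vector_derivative (linepath a b) (at (snd p)))"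
        by (auto intro!: continuous_intros)
      show ?thesis using continuous_on_mult[OF c1 c2] by (simp add: case_prod_unfold)
    qed
    then show ?thesis
      unfolding contour_integral_integral cbox_interval[symmetric]
      by (rule integral_continuous_on_param)
  qed
  have lint: "(\<lambda>v. contour_integral (linepath a b) (\<lambda>z. \<Phi> z v)) contour_integrable_on ?g" for a b
    by (rule contour_integrable_continuous_circlepath) (simp only: pim lcont)
  have tri: "contour_integral (linepath a b) (\<lambda>z. contour_integral ?g (\<Phi> z)) +
             contour_integral (linepath b c) (\<lambda>z. contour_integral ?g (\<Phi> z)) +
             contour_integral (linepath c a) (\<lambda>z. contour_integral ?g (\<Phi> z)) = 0" for a b c
  proof -
    have z: "contour_integral (linepath a b) (\<lambda>z. \<Phi> z v) + contour_integral (linepath b c) (\<lambda>z. \<Phi> z v)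
         + contour_integral (linepath c a) (\<lambda>z. \<Phi> z v) = 0" if v: "v \<in> path_image ?g" for v
    proof -
      have h: "(\<lambda>z. \<Phi> z v) holomorphic_on UNIV" using v pim hol by (metis)
      have ci: "(\<lambda>z. \<Phi> z v) contour_integrable_on linepath x y" for x y
        by (rule contour_integrable_continuous_linepath)
           (rule continuous_on_subset[OF holomorphic_on_imp_continuous_on[OF h]], simp)
      have "contour_integral (linepath a b +++ linepath b c +++ linepath c a) (\<lambda>z. \<Phi> z v) = 0"
        by (rule contour_integral_unique[OF Cauchy_theorem_triangle])
           (rule holomorphic_on_subset[OF h], simp)
      then show ?thesis using ci by (simp add: contour_integrable_joinI add.assoc)
    qed
    show ?thesis
      unfolding swap
      apply (simp add: contour_integral_add[symmetric] lint contour_integrable_add)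
      apply (subst contour_integral_cong[OF refl z])
      apply auto
      done
  qed
  have "(\<lambda>z. contour_integral ?g (\<Phi> z)) analytic_on UNIV"
    by (rule Morera_local_triangle) (auto intro!: exI[of _ UNIV] conth tri)
  then show ?thesis by (simp add: analytic_imp_holomorphic)
qed


lemma lat_unique:
  assumes "lattice_basis w1 w2"
    and "of_int m * w1 + of_int n * w2 = of_int m' * w1 + of_int n' * (w2::complex)"
  shows "m = m' \<and> n = n'"
proof -
  have w1: "w1 \<noteq> 0" and im: "Im (w2/w1) \<noteq> 0" using assms(1) by (auto simp: lattice_basis_def)
  obtain \<tau> where t: "\<tau> = w2/w1" by blast
  have w2: "w2 = \<tau> * w1" using t w1 by simp
  have "(of_int m + of_int n * \<tau>) * w1 = (of_int m' + of_int n' * \<tau>) * w1"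
    using assms(2) unfolding w2 by (simp add: algebra_simps)
  then have e: "of_int m + of_int n * \<tau> = of_int m' + of_int n' * \<tau>"
    using w1 by simp
  then have "Im (of_int m + of_int n * \<tau>) = Im (of_int m' + of_int n' * \<tau>)"
    by simp
  then have "of_int n * Im \<tau> = of_int n' * Im \<tau>" by simp
  then have nn: "n = n'" using im t by simp
  then show ?thesis using e by simp
qed

lemma int_valued_const:
  fixes f :: "'a::topological_space \<Rightarrow> real"
  assumes "connected S" "continuous_on S f" "\<And>x. x \<in> S \<Longrightarrow> f x \<in> \<int>"
  shows "\<exists>k::int. \<forall>x\<in>S. f x = of_int k"
proof -
  have "f constant_on S"
  proof (rule continuous_discrete_range_constant[OF assms(1,2)])
    fix x assume x: "x \<in> S"
    show "\<exists>e>0. \<forall>y. y \<in> S \<and> f y \<noteq> f x \<longrightarrow> e \<le> norm (f y - f x)"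
    proof (intro exI[of _ 1] conjI allI impI)
      fix y assume y: "y \<in> S \<and> f y \<noteq> f x"
      then obtain a b where "f y = of_int a" "f x = of_int b" using x assms(3) by (meson Ints_cases)
      then have "a \<noteq> b" using y by auto
      then have "a \<le> b - 1 \<or> a \<ge> b + 1" by arith
      then have "real_of_int a \<le> real_of_int b - 1 \<or> real_of_int a \<ge> real_of_int b + 1"
        by (metis of_int_1 of_int_add of_int_diff of_int_le_iff)
      with \<open>f y = of_int a\<close> \<open>f x = of_int b\<close> show "1 \<le> norm (f y - f x)" by auto
    qed simp
  qed
  then obtain c where c: "\<And>x. x \<in> S \<Longrightarrow> f x = c" by (auto simp: constant_on_def)
  show ?thesis
  proof (cases "S = {}")
    case True then show ?thesis by auto
  next
    case False
    then obtain x where "x \<in> S" by auto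
    then obtain k where "f x = of_int k" using assms(3) by (meson Ints_cases)
    then show ?thesis using c \<open>x \<in> S\<close> by auto
  qed
qed

lemma lat_valued_const:
  fixes F :: "'a::topological_space \<Rightarrow> complex"
  assumes lat: "lattice_basis w1 w2" and S: "connected S" and cont: "continuous_on S F"
    and val: "\<And>x. x \<in> S \<Longrightarrow> \<exists>m n::int. F x = of_int m * w1 + of_int n * w2"
  shows "\<exists>m n::int. \<forall>x\<in>S. F x = of_int m * w1 + of_int n * w2"
proof -
  have w1: "w1 \<noteq> 0" and im: "Im (w2/w1) \<noteq> 0" using lat by (auto simp: lattice_basis_def)
  obtain \<tau> where t: "\<tau> = w2/w1" by blast
  have w2: "w2 = \<tau> * w1" using t w1 by simp
  have imt: "Im \<tau> \<noteq> 0" using im t by simp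
  define N where "N x = Im (F x / w1) / Im \<tau>" for x
  define M where "M x = Re (F x / w1) - N x * Re \<tau>" for x
  have key: "N x = of_int n \<and> M x = of_int m" if "F x = of_int m * w1 + of_int n * w2" for x m n
  proof -
    have "F x = (of_int m + of_int n * \<tau>) * w1" using that unfolding w2 by (simp add: algebra_simps)
    then have "F x / w1 = of_int m + of_int n * \<tau>" using w1 by simp
    then show ?thesis using imt by (simp add: N_def M_def)
  qed
  have cN: "continuous_on S N" unfolding N_def using w1 imt by (intro continuous_intros cont) auto
  have cM: "continuous_on S M" unfolding M_def N_def using w1 imt by (intro continuous_intros cont) auto
  obtain n0 where n0: "\<forall>x\<in>S. N x = of_int n0"
    using int_valued_const[OF S cN] val key by (metis Ints_of_int)
  obtain m0 where m0: "\<forall>x\<in>S. M x = of_int m0"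
    using int_valued_const[OF S cM] val key by (metis Ints_of_int)
  show ?thesis
  proof (intro exI ballI)
    fix x assume x: "x \<in> S"
    then obtain m n where e: "F x = of_int m * w1 + of_int n * w2" using val by blast
    then have "n = n0" "m = m0" using key[OF e] n0 m0 x by auto
    then show "F x = of_int m0 * w1 + of_int n0 * w2" using e by simp
  qed
qed

lemma periodic_norm_const:
  fixes \<phi> :: "complex \<Rightarrow> complex"
  assumes lat: "lattice_basis w1 w2" and hol: "\<phi> holomorphic_on UNIV"
    and p1: "\<And>z. norm (\<phi> (z + w1)) = norm (\<phi> z)"
    and p2: "\<And>z. norm (\<phi> (z + w2)) = norm (\<phi> z)"
  shows "\<exists>c. \<forall>z. \<phi> z = c"
proof -
  have w1: "w1 \<noteq> 0" and im: "Im (w2/w1) \<noteq> 0" using lat by (auto simp: lattice_basis_def)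
  have q1: "norm (\<phi> (z + of_int m * w1)) = norm (\<phi> z)" for z m
  proof (induction m rule: int_induct[where k=0])
    case base then show ?case by simp
  next
    case (step1 i) then show ?case using p1[of "z + of_int i * w1"] by (simp add: algebra_simps)
  next
    case (step2 i) then show ?case using p1[of "z + of_int (i - 1) * w1"] by (simp add: algebra_simps)
  qed
  have q2: "norm (\<phi> (z + of_int n * w2)) = norm (\<phi> z)" for z n
  proof (induction n rule: int_induct[where k=0])
    case base then show ?case by simp
  next
    case (step1 i) then show ?case using p2[of "z + of_int i * w2"] by (simp add: algebra_simps)
  next
    case (step2 i) then show ?case using p2[of "z + of_int (i - 1) * w2"] by (simp add: algebra_simps)
  qed
  define K where "K = (\<lambda>p::real\<times>real. of_real (fst p) * w1 + of_real (snd p) * w2) ` ({0..1} \<times> {0..1})"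
  have "compact K" unfolding K_def
    by (intro compact_continuous_image continuous_intros compact_Times compact_Icc)
  then have "compact (\<phi> ` K)"
    by (intro compact_continuous_image continuous_on_subset[OF holomorphic_on_imp_continuous_on[OF hol]]) auto
  then obtain B where B: "\<And>x. x \<in> K \<Longrightarrow> norm (\<phi> x) \<le> B"
    using compact_imp_bounded bounded_iff by (metis image_eqI)
  have "norm (\<phi> z) \<le> B" for z
  proof -
    obtain \<tau> where tt: "\<tau> = w2/w1" by blast
    have w2: "w2 = \<tau> * w1" using tt w1 by simp
    have imt: "Im \<tau> \<noteq> 0" using im tt by simp
    obtain \<zeta> where zz: "\<zeta> = z/w1" by blast
    have z: "z = \<zeta> * w1" using zz w1 by simp
    define t where "t = Im \<zeta> / Im \<tau>"
    define s where "s = Re \<zeta> - t * Re \<tau>"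
    have "\<zeta> = of_real s + of_real t * \<tau>"
      using imt by (simp add: complex_eq_iff s_def t_def)
    then have zst: "z = of_real s * w1 + of_real t * w2" unfolding z w2 by (simp add: algebra_simps)
    define z0 where "z0 = of_real (frac s) * w1 + of_real (frac t) * w2"
    have "z0 \<in> K" unfolding K_def z0_def
      by (rule image_eqI[of _ _ "(frac s, frac t)"]) (auto simp: less_imp_le[OF frac_lt_1])
    have "z = z0 + of_int \<lfloor>s\<rfloor> * w1 + of_int \<lfloor>t\<rfloor> * w2"
      unfolding zst z0_def frac_def by (simp add: algebra_simps)
    then have "norm (\<phi> z) = norm (\<phi> z0)" using q1 q2 by metis
    then show ?thesis using B \<open>z0 \<in> K\<close> by simp
  qed
  then have "bounded (range \<phi>)" by (auto simp: bounded_iff)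
  then have "\<phi> constant_on UNIV" by (rule Liouville_theorem[OF hol])
  then show ?thesis by (auto simp: constant_on_def)
qed



lemma tube_cases:
  assumes "r > 0"
  shows "(\<exists>r0>0. r = ereal r0 \<and> {v::complex. ereal (cmod v) < r} = ball 0 r0) \<or>
         (r = \<infinity> \<and> {v::complex. ereal (cmod v) < r} = UNIV)"
proof (cases r)
  case (real r0)
  then show ?thesis using assms by (auto simp: ball_def)
next
  case PInf
  then show ?thesis by auto
next
  case MInf
  then show ?thesis using assms by auto
qed

lemma holo2_partial:
  assumes "holo2 j S" "(z, v) \<in> S"
  shows "(\<lambda>w. fst (j (z, w))) field_differentiable at v"
    and "(\<lambda>w. snd (j (z, w))) field_differentiable at v"
    and "(\<lambda>w. fst (j (w, v))) field_differentiable at z"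
    and "(\<lambda>w. snd (j (w, v))) field_differentiable at z"
proof -
  obtain D where hd: "(j has_derivative D) (at (z, v))"
    and lin: "\<And>a x y. D (a * x, a * y) = (a * fst (D (x, y)), a * snd (D (x, y)))"
    using assms unfolding holo2_def by blast
  have d1: "((\<lambda>w. (z, w)) has_derivative (\<lambda>h. (0, h))) (at v)"
    by (auto intro!: derivative_eq_intros)
  have d2: "((\<lambda>w. (w, v)) has_derivative (\<lambda>h. (h, 0))) (at z)"
    by (auto intro!: derivative_eq_intros)
  have c1: "((\<lambda>w. j (z, w)) has_derivative (\<lambda>h. D (0, h))) (at v)"
    using has_derivative_compose[OF d1, of j D] hd by (simp only:)
  have c2: "((\<lambda>w. j (w, v)) has_derivative (\<lambda>h. D (h, 0))) (at z)"
    using has_derivative_compose[OF d2, of j D] hd by (simp only:)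
  have e1: "D (0, h) = (h * fst (D (0, 1)), h * snd (D (0, 1)))" for h
    using lin[of h 0 1] by simp
  have e2: "D (h, 0) = (h * fst (D (1, 0)), h * snd (D (1, 0)))" for h
    using lin[of h 1 0] by simp
  have f1: "(\<lambda>h. fst (D (0, h))) = (*) (fst (D (0, 1)))"
    "(\<lambda>h. snd (D (0, h))) = (*) (snd (D (0, 1)))"
    "(\<lambda>h. fst (D (h, 0))) = (*) (fst (D (1, 0)))"
    "(\<lambda>h. snd (D (h, 0))) = (*) (snd (D (1, 0)))"
    by (rule ext, metis e1 e2 fst_conv snd_conv mult.commute)+
  show "(\<lambda>w. fst (j (z, w))) field_differentiable at v"
    unfolding field_differentiable_def has_field_derivative_def
    using has_derivative_fst[OF c1] unfolding f1 by blast
  show "(\<lambda>w. snd (j (z, w))) field_differentiable at v"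
    unfolding field_differentiable_def has_field_derivative_def
    using has_derivative_snd[OF c1] unfolding f1 by blast
  show "(\<lambda>w. fst (j (w, v))) field_differentiable at z"
    unfolding field_differentiable_def has_field_derivative_def
    using has_derivative_fst[OF c2] unfolding f1 by blast
  show "(\<lambda>w. snd (j (w, v))) field_differentiable at z"
    unfolding field_differentiable_def has_field_derivative_def
    using has_derivative_snd[OF c2] unfolding f1 by blast
qed

lemma holo2_cont:
  assumes "holo2 j S" shows "continuous_on S j"
proof -
  have "\<forall>p\<in>S. isCont j p"
    using assms unfolding holo2_def using has_derivative_continuous by blast
  then show ?thesis by (simp add: continuous_at_imp_continuous_on)
qed



theorem lemma2p5p9:
  fixes w1 w2 u1 u2 :: complex and r R :: ereal
    and j :: "complex \<times> complex \<Rightarrow> complex \<times> complex"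
  assumes lat: "lattice_basis w1 w2"
    and unit: "cmod u1 = 1" "cmod u2 = 1"
    and nontorsion: "\<not> (\<exists>k::nat. k > 0 \<and> u1 ^ k = 1 \<and> u2 ^ k = 1)"
    and rpos: "r > 0" and Rpos: "R > 0"
    and holo: "holo2 j (tube r)"
    and maps: "j ` tube r \<subseteq> tube R"
    and welldef: "\<And>p q. p \<in> tube r \<Longrightarrow> q \<in> tube r \<Longrightarrow>
                    tot_rel w1 w2 u1 u2 p q \<Longrightarrow> tot_rel w1 w2 u1 u2 (j p) (j q)"
    and inj: "\<And>p q. p \<in> tube r \<Longrightarrow> q \<in> tube r \<Longrightarrow>
                    tot_rel w1 w2 u1 u2 (j p) (j q) \<Longrightarrow> tot_rel w1 w2 u1 u2 p q"
    and openim: "open {q. \<exists>p\<in>tube r. tot_rel w1 w2 u1 u2 (j p) q}"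
    and zero: "\<And>z. tot_rel w1 w2 u1 u2 (j (z, 0)) (z, 0)"
  shows "\<exists>c::complex. c \<noteq> 0 \<and> ereal (cmod c) * r \<le> R \<and>
           (\<forall>p\<in>tube r. tot_rel w1 w2 u1 u2 (j p) (fst p, c * snd p))"
proof -
  define f where "f p = fst (j p)" for p
  define g where "g p = snd (j p)" for p
  have jfg: "j p = (f p, g p)" for p by (simp add: f_def g_def)
  define lt where "lt m n = of_int m * w1 + of_int n * w2" for m n :: int
  define ch where "ch m n = u1 powi m * u2 powi n" for m n :: int
  have rel: "tot_rel w1 w2 u1 u2 p q \<longleftrightarrow> (\<exists>m n. q = (fst p + lt m n, ch m n * snd p))" for p q
    unfolding tot_rel_def lt_def ch_def by (simp add: add.assoc)
  have u1nz: "u1 \<noteq> 0" and u2nz: "u2 \<noteq> 0" using unit by auto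
  have chn: "cmod (ch m n) = 1" for m n
    by (simp add: ch_def norm_mult norm_power_int unit)
  have chnz: "ch m n \<noteq> 0" for m n using chn[of m n] by auto
  define D where "D = {v::complex. ereal (cmod v) < r}"
  have tubeD: "tube r = UNIV \<times> D" by (auto simp: tube_def D_def)
  have Dcases: "(\<exists>r0>0. r = ereal r0 \<and> D = ball 0 r0) \<or> (r = \<infinity> \<and> D = UNIV)"
    using tube_cases[OF rpos] unfolding D_def .
  have openD: "open D" using Dcases by auto
  have convD: "convex D" using Dcases by auto
  have D0: "0 \<in> D" using rpos by (simp add: D_def zero_ereal_def)
  have Dmono: "v' \<in> D" if "v \<in> D" "cmod v' \<le> cmod v" for v v'
    using that unfolding D_def by (metis (mono_tags, lifting) ereal_less_eq(3) le_less_trans mem_Collect_eq)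
  have conn: "connected (tube r)" unfolding tubeD
    by (intro convex_connected convex_Times convD convex_UNIV)
  have cj: "continuous_on (tube r) j" by (rule holo2_cont[OF holo])
  have cf: "continuous_on (tube r) f" unfolding f_def by (intro continuous_intros cj)
  have cg: "continuous_on (tube r) g" unfolding g_def by (intro continuous_intros cj)
  have hfv: "(\<lambda>v. f (z, v)) holomorphic_on D" for z
    unfolding holomorphic_on_open[OF openD] f_def
    using holo2_partial(1)[OF holo] tubeD by (auto simp: field_differentiable_def)
  have hgv: "(\<lambda>v. g (z, v)) holomorphic_on D" for z
    unfolding holomorphic_on_open[OF openD] g_def
    using holo2_partial(2)[OF holo] tubeD by (auto simp: field_differentiable_def)
  have hfz: "(\<lambda>z. f (z, v)) holomorphic_on UNIV" if "v \<in> D" for v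
    unfolding holomorphic_on_open[OF open_UNIV] f_def
    using holo2_partial(3)[OF holo] tubeD that by (auto simp: field_differentiable_def)
  have hgz: "(\<lambda>z. g (z, v)) holomorphic_on UNIV" if "v \<in> D" for v
    unfolding holomorphic_on_open[OF open_UNIV] g_def
    using holo2_partial(4)[OF holo] tubeD that by (auto simp: field_differentiable_def)
  have latu: "m = m' \<and> n = n'" if "lt m n = lt m' n'" for m n m' n'
    using lat_unique[OF lat] that unfolding lt_def by blast
  have latc: "\<exists>m n. \<forall>x\<in>S. F x = lt m n"
    if "connected S" "continuous_on S F" "\<And>x. x \<in> S \<Longrightarrow> \<exists>m n. F x = lt m n"
    for S :: "'x::topological_space set" and F
    using lat_valued_const[OF lat that(1,2)] that(3) unfolding lt_def by blast
  have z0: "g (z, 0) = 0 \<and> (\<exists>m n. f (z, 0) - z = lt m n)" for z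
  proof -
    obtain m n where e: "(z, 0) = (f (z, 0) + lt m n, ch m n * g (z, 0))"
      using zero[of z] unfolding rel jfg by auto
    then have "g (z, 0) = 0" using chnz by auto
    moreover have "f (z, 0) - z = lt (-m) (-n)" using e by (auto simp: lt_def algebra_simps)
    ultimately show ?thesis by blast
  qed
  have g0: "g (z, 0) = 0" for z using z0 by blast
  obtain a b where fab: "\<And>z. f (z, 0) = z + lt a b"
  proof -
    have c0: "continuous_on UNIV (\<lambda>z. f (z, 0) - z)"
    proof -
      have "continuous_on UNIV (\<lambda>z::complex. (z, 0::complex))" by (intro continuous_intros)
      moreover have "(\<lambda>z::complex. (z, 0::complex)) ` UNIV \<subseteq> tube r" using D0 tubeD by auto
      ultimately have "continuous_on UNIV (f \<circ> (\<lambda>z::complex. (z, 0::complex)))"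
        by (intro continuous_on_compose continuous_on_subset[OF cf])
      then show ?thesis by (intro continuous_intros) (simp add: o_def)
    qed
    obtain m n where "\<forall>z\<in>UNIV. f (z, 0) - z = lt m n"
      using latc[OF connected_UNIV c0] z0 by blast
    then show ?thesis using that[of m n] by (simp add: algebra_simps)
  qed
  have equi: "f (fst p + lt m1 n1, ch m1 n1 * snd p) = f p + lt m1 n1 \<and>
              g (fst p + lt m1 n1, ch m1 n1 * snd p) = ch m1 n1 * g p"
    if p: "p \<in> tube r" for m1 n1 p
  proof -
    define q where "q p = (fst p + lt m1 n1, ch m1 n1 * snd p)" for p :: "complex \<times> complex"
    have qin: "q p \<in> tube r" if "p \<in> tube r" for p
      using that Dmono unfolding tubeD q_def by (auto simp: norm_mult chn)
    have rq: "\<exists>m n. j (q p) = (f p + lt m n, ch m n * g p)" if "p \<in> tube r" for p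
    proof -
      have "tot_rel w1 w2 u1 u2 p (q p)" unfolding rel q_def by blast
      then have "tot_rel w1 w2 u1 u2 (j p) (j (q p))" using welldef that qin by blast
      then show ?thesis unfolding rel jfg by auto
    qed
    have cq: "continuous_on (tube r) (\<lambda>p. f (q p) - f p)"
    proof -
      have "continuous_on (tube r) q" unfolding q_def by (intro continuous_intros)
      then have "continuous_on (tube r) (f \<circ> q)"
        using qin by (intro continuous_on_compose continuous_on_subset[OF cf]) auto
      then show ?thesis by (intro continuous_intros cf) (simp add: o_def)
    qed
    obtain m0 n0 where mn0: "\<forall>p\<in>tube r. f (q p) - f p = lt m0 n0"
    proof -
      have "\<exists>m n. f (q p) - f p = lt m n" if "p \<in> tube r" for p
        using rq[OF that] unfolding jfg by fastforce
      then show ?thesis using latc[OF conn cq] that by blast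
    qed
    have "(0::complex, 0::complex) \<in> tube r" using D0 tubeD by auto
    then have "lt m0 n0 = f (q (0, 0)) - f (0, 0)" using mn0 by auto
    also have "\<dots> = lt m1 n1" unfolding q_def using fab by simp
    finally have l01: "lt m0 n0 = lt m1 n1" .
    obtain m n where jq: "j (q p) = (f p + lt m n, ch m n * g p)" using rq[OF p] by blast
    then have "lt m n = f (q p) - f p" unfolding jfg by simp
    then have "lt m n = lt m1 n1" using mn0 p l01 by simp
    then have "m = m1" "n = n1" using latu by auto
    then show ?thesis using jq mn0 p l01 unfolding jfg q_def by auto
  qed
  have eq1: "f (z + w1, u1 * v) = f (z, v) + w1 \<and> g (z + w1, u1 * v) = u1 * g (z, v)"
    if "v \<in> D" for z v
    using equi[of "(z, v)" 1 0] that tubeD by (simp add: lt_def ch_def)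
  have eq2: "f (z + w2, u2 * v) = f (z, v) + w2 \<and> g (z + w2, u2 * v) = u2 * g (z, v)"
    if "v \<in> D" for z v
    using equi[of "(z, v)" 0 1] that tubeD by (simp add: lt_def ch_def)
  obtain \<rho> :: real where rho: "\<rho> > 0" "cball 0 \<rho> \<subseteq> D"
  proof -
    from Dcases show ?thesis
    proof
      assume "\<exists>r0>0. r = ereal r0 \<and> D = ball 0 r0"
      then obtain r0 where "r0 > 0" "D = ball 0 r0" by blast
      then show ?thesis using that[of "r0/2"] by (simp add: cball_subset_ball_iff)
    next
      assume "r = \<infinity> \<and> D = UNIV"
      then show ?thesis using that[of 1] by auto
    qed
  qed
  have coeff_holo: "(\<lambda>z. (deriv ^^ k) (\<lambda>v. h (z, v)) 0) holomorphic_on UNIV"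
    if ch: "continuous_on (tube r) h" and hv: "\<And>z. (\<lambda>v. h (z, v)) holomorphic_on D"
      and hz: "\<And>v. v \<in> D \<Longrightarrow> (\<lambda>z. h (z, v)) holomorphic_on UNIV" for h k
  proof -
    have sphD: "sphere 0 \<rho> \<subseteq> D" using rho by auto
    have A: "(\<lambda>z. contour_integral (circlepath 0 \<rho>) (\<lambda>v. h (z, v) / v ^ Suc k)) holomorphic_on UNIV"
    proof (rule param_circle_holo[OF _ _ rho(1)])
      have "continuous_on (UNIV \<times> sphere 0 \<rho>) h"
        by (rule continuous_on_subset[OF ch]) (use sphD tubeD in auto)
      moreover have "continuous_on (UNIV \<times> sphere 0 \<rho>) (\<lambda>p::complex\<times>complex. snd p ^ Suc k)"
        by (intro continuous_intros)
      ultimately have "continuous_on (UNIV \<times> sphere 0 \<rho>) (\<lambda>p::complex\<times>complex. h p / snd p ^ Suc k)"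
        using rho by (intro continuous_on_divide) auto
      then show "continuous_on (UNIV \<times> sphere 0 \<rho>) (\<lambda>(z, v). h (z, v) / v ^ Suc k)"
        by (simp add: case_prod_unfold)
      show "(\<lambda>z. h (z, v) / v ^ Suc k) holomorphic_on UNIV" if "v \<in> sphere 0 \<rho>" for v
        using hz that sphD by (intro holomorphic_intros) auto
    qed
    have eq: "contour_integral (circlepath 0 \<rho>) (\<lambda>v. h (z, v) / v ^ Suc k) =
                (2 * pi * \<i>) / fact k * (deriv ^^ k) (\<lambda>v. h (z, v)) 0" for z
    proof -
      have "((\<lambda>v. h (z, v) / (v - 0) ^ Suc k) has_contour_integral
              ((2 * pi * \<i>) / fact k * (deriv ^^ k) (\<lambda>v. h (z, v)) 0)) (circlepath 0 \<rho>)"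
      proof (rule Cauchy_has_contour_integral_higher_derivative_circlepath)
        show "continuous_on (cball 0 \<rho>) (\<lambda>v. h (z, v))"
          using holomorphic_on_imp_continuous_on[OF hv] rho(2) continuous_on_subset by blast
        show "(\<lambda>v. h (z, v)) holomorphic_on ball 0 \<rho>"
          using hv rho(2) ball_subset_cball holomorphic_on_subset by blast
      qed (use rho in auto)
      then show ?thesis by (simp add: contour_integral_unique)
    qed
    have "(\<lambda>z. fact k / (2 * pi * \<i>) * contour_integral (circlepath 0 \<rho>) (\<lambda>v. h (z, v) / v ^ Suc k))
            holomorphic_on UNIV"
      by (intro holomorphic_intros A)
    moreover have "fact k / (2 * pi * \<i>) * contour_integral (circlepath 0 \<rho>) (\<lambda>v. h (z, v) / v ^ Suc k)
        = (deriv ^^ k) (\<lambda>v. h (z, v)) 0" for z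
      unfolding eq by simp
    ultimately show ?thesis by simp
  qed
  have per: "u ^ k * (deriv ^^ k) (\<lambda>v. h (z + w, v)) 0 = \<alpha> * (deriv ^^ k) (\<lambda>v. h (z, v)) 0"
    if hv: "\<And>z. (\<lambda>v. h (z, v)) holomorphic_on D" and u: "cmod u = 1"
      and he: "\<And>z v. v \<in> D \<Longrightarrow> h (z + w, u * v) = \<alpha> * h (z, v) + \<beta>" and k: "k \<ge> 1"
    for h u w \<alpha> \<beta> k z
  proof -
    have uD: "u * v \<in> D" if "v \<in> D" for v using Dmono[OF that] u by (simp add: norm_mult)
    have "(deriv ^^ k) (\<lambda>v. h (z + w, u * v)) 0 = u ^ k * (deriv ^^ k) (\<lambda>v. h (z + w, v)) (u * 0)"
      by (rule higher_deriv_compose_linear[OF hv openD openD D0]) (use uD in auto)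
    moreover have "(deriv ^^ k) (\<lambda>v. h (z + w, u * v)) 0 = (deriv ^^ k) (\<lambda>v. \<alpha> * h (z, v) + \<beta>) 0"
    proof (rule higher_deriv_transform_within_open[OF _ _ openD D0])
      have "(\<lambda>v. h (z + w, v)) \<circ> (\<lambda>v. u * v) holomorphic_on D"
        by (rule holomorphic_on_compose_gen[OF _ hv]) (auto intro!: holomorphic_intros uD)
      then show "(\<lambda>v. h (z + w, u * v)) holomorphic_on D" by (simp add: o_def)
      show "(\<lambda>v. \<alpha> * h (z, v) + \<beta>) holomorphic_on D" by (intro holomorphic_intros hv)
    qed (use he in auto)
    moreover have "(deriv ^^ k) (\<lambda>v. \<alpha> * h (z, v) + \<beta>) 0 = \<alpha> * (deriv ^^ k) (\<lambda>v. h (z, v)) 0"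
    proof -
      have "(deriv ^^ k) (\<lambda>v. \<alpha> * h (z, v) + \<beta>) 0 = (deriv ^^ k) (\<lambda>v. \<alpha> * h (z, v)) 0 + (deriv ^^ k) (\<lambda>v. \<beta>) 0"
        by (rule higher_deriv_add[OF _ _ openD D0]) (auto intro!: holomorphic_intros hv)
      also have "\<dots> = (deriv ^^ k) (\<lambda>v. \<alpha> * h (z, v)) 0" using k by simp
      also have "\<dots> = \<alpha> * (deriv ^^ k) (\<lambda>v. h (z, v)) 0"
        by (rule higher_deriv_cmult[OF hv D0 openD])
      finally show ?thesis .
    qed
    ultimately show ?thesis by simp
  qed
  have dzero: "(deriv ^^ k) (\<lambda>v. f (z, v)) 0 = 0" if k: "k \<ge> 1" for k z
  proof -
    let ?d = "\<lambda>z. (deriv ^^ k) (\<lambda>v. f (z, v)) 0"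
    have p1: "u1 ^ k * ?d (z + w1) = ?d z" for z
      using per[OF hfv unit(1), of w1 1 w1 k z] eq1 k by simp
    have p2: "u2 ^ k * ?d (z + w2) = ?d z" for z
      using per[OF hfv unit(2), of w2 1 w2 k z] eq2 k by simp
    have "\<exists>c. \<forall>z. ?d z = c"
    proof (rule periodic_norm_const[OF lat coeff_holo[OF cf hfv hfz]])
      show "cmod (?d (z + w1)) = cmod (?d z)" for z
        using arg_cong[OF p1[of z], of norm] by (simp add: norm_mult norm_power unit)
      show "cmod (?d (z + w2)) = cmod (?d z)" for z
        using arg_cong[OF p2[of z], of norm] by (simp add: norm_mult norm_power unit)
    qed
    then obtain \<delta> where \<delta>: "\<And>z. ?d z = \<delta>" by blast
    have "u1 ^ k * \<delta> = \<delta>" "u2 ^ k * \<delta> = \<delta>" using p1[of 0] p2[of 0] \<delta> by auto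
    then have "\<delta> = 0 \<or> (u1 ^ k = 1 \<and> u2 ^ k = 1)" by (metis mult_cancel_right2)
    then have "\<delta> = 0" using nontorsion k by auto
    then show ?thesis using \<delta> by simp
  qed
  have ecoef: "\<exists>\<epsilon>. (\<forall>z. (deriv ^^ k) (\<lambda>v. g (z, v)) 0 = \<epsilon>) \<and> (k \<ge> 2 \<longrightarrow> \<epsilon> = 0)"
    if k: "k \<ge> 1" for k
  proof -
    let ?d = "\<lambda>z. (deriv ^^ k) (\<lambda>v. g (z, v)) 0"
    have p1: "u1 ^ k * ?d (z + w1) = u1 * ?d z" for z
      using per[OF hgv unit(1), of w1 u1 0 k z] eq1 k by simp
    have p2: "u2 ^ k * ?d (z + w2) = u2 * ?d z" for z
      using per[OF hgv unit(2), of w2 u2 0 k z] eq2 k by simp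
    have "\<exists>c. \<forall>z. ?d z = c"
    proof (rule periodic_norm_const[OF lat coeff_holo[OF cg hgv hgz]])
      show "cmod (?d (z + w1)) = cmod (?d z)" for z
        using arg_cong[OF p1[of z], of norm] by (simp add: norm_mult norm_power unit)
      show "cmod (?d (z + w2)) = cmod (?d z)" for z
        using arg_cong[OF p2[of z], of norm] by (simp add: norm_mult norm_power unit)
    qed
    then obtain \<epsilon> where \<epsilon>: "\<And>z. ?d z = \<epsilon>" by blast
    have "\<epsilon> = 0" if k2: "k \<ge> 2"
    proof -
      obtain l where l: "k = Suc l" "l > 0" using k2 by (cases k) auto
      have "u1 * (u1 ^ l * \<epsilon>) = u1 * \<epsilon>" "u2 * (u2 ^ l * \<epsilon>) = u2 * \<epsilon>"
        using p1[of 0] p2[of 0] \<epsilon> l by (auto simp: mult.assoc)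
      then have "u1 ^ l * \<epsilon> = \<epsilon>" "u2 ^ l * \<epsilon> = \<epsilon>" using u1nz u2nz by auto
      then have "\<epsilon> = 0 \<or> (u1 ^ l = 1 \<and> u2 ^ l = 1)" by (metis mult_cancel_right2)
      then show "\<epsilon> = 0" using nontorsion l by auto
    qed
    then show ?thesis using \<epsilon> by blast
  qed
  obtain c where c: "\<And>z. (deriv ^^ 1) (\<lambda>v. g (z, v)) 0 = c" using ecoef[of 1] by auto
  have ezero: "(deriv ^^ k) (\<lambda>v. g (z, v)) 0 = 0" if "k \<ge> 2" for k z
    using ecoef[of k] that by auto
  have fg_form: "f (z, v) = z + lt a b \<and> g (z, v) = c * v" if v: "v \<in> D" for z v
  proof -
    obtain \<rho>' where b: "v \<in> ball 0 \<rho>'" "ball 0 \<rho>' \<subseteq> D"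
    proof -
      from Dcases show ?thesis
      proof
        assume "\<exists>r0>0. r = ereal r0 \<and> D = ball 0 r0"
        then obtain r0 where "D = ball 0 r0" by blast
        then show ?thesis using that[of r0] v by auto
      next
        assume "r = \<infinity> \<and> D = UNIV"
        then show ?thesis using that[of "cmod v + 1"] by auto
      qed
    qed
    have sf: "(\<lambda>n. (deriv ^^ n) (\<lambda>v. f (z, v)) 0 / fact n * (v - 0) ^ n) sums f (z, v)"
      by (rule holomorphic_power_series[OF holomorphic_on_subset[OF hfv b(2)] b(1)])
    have "(\<lambda>n. (deriv ^^ n) (\<lambda>v. f (z, v)) 0 / fact n * (v - 0) ^ n) = (\<lambda>n. if n = 0 then f (z, 0) else 0)"
    proof
      fix n show "(deriv ^^ n) (\<lambda>v. f (z, v)) 0 / fact n * (v - 0) ^ n = (if n = 0 then f (z, 0) else 0)"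
        using dzero[of n z] by (cases "n = 0") auto
    qed
    then have f1: "f (z, v) = f (z, 0)"
      using sf sums_single[of 0 "\<lambda>_. f (z, 0)"] sums_unique2 by metis
    have sg: "(\<lambda>n. (deriv ^^ n) (\<lambda>v. g (z, v)) 0 / fact n * (v - 0) ^ n) sums g (z, v)"
      by (rule holomorphic_power_series[OF holomorphic_on_subset[OF hgv b(2)] b(1)])
    have "(\<lambda>n. (deriv ^^ n) (\<lambda>v. g (z, v)) 0 / fact n * (v - 0) ^ n) = (\<lambda>n. if n = 1 then c * v else 0)"
    proof
      fix n show "(deriv ^^ n) (\<lambda>v. g (z, v)) 0 / fact n * (v - 0) ^ n = (if n = 1 then c * v else 0)"
      proof (cases "n = 0")
        case True then show ?thesis using g0 by simp
      next
        case False
        show ?thesis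
        proof (cases "n = 1")
          case True then show ?thesis using c[of z] by simp
        next
          case False
          then show ?thesis using ezero[of n z] \<open>n \<noteq> 0\<close> by simp
        qed
      qed
    qed
    then have g1: "g (z, v) = c * v"
      using sg sums_single[of 1 "\<lambda>_. c * v"] sums_unique2 by metis
    show ?thesis using f1 g1 fab by simp
  qed
  have rhoD: "complex_of_real \<rho> \<in> D" using rho by auto
  have cnz: "c \<noteq> 0"
  proof
    assume c0: "c = 0"
    let ?p = "(0::complex, complex_of_real \<rho>)" and ?q = "(0::complex, 0::complex)"
    have pin: "?p \<in> tube r" and qin: "?q \<in> tube r" using rhoD D0 tubeD by auto
    have "j ?p = j ?q" using fg_form[OF rhoD, of 0] fg_form[OF D0, of 0] c0 jfg by simp
    then have "tot_rel w1 w2 u1 u2 (j ?p) (j ?q)" unfolding rel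
      by (intro exI[of _ 0]) (simp add: lt_def ch_def)
    then have "tot_rel w1 w2 u1 u2 ?p ?q" using inj pin qin by blast
    then obtain m n where "ch m n * complex_of_real \<rho> = 0" unfolding rel by auto
    then show False using chnz rho(1) by simp
  qed
  have bnd: "ereal (cmod c * cmod v) < R" if "v \<in> D" for v
  proof -
    have "j (0, v) \<in> tube R" using maps that tubeD by auto
    then show ?thesis using fg_form[OF that, of 0] jfg by (simp add: tube_def norm_mult)
  qed
  have cpos: "cmod c > 0" using cnz by simp
  have bound: "ereal (cmod c) * r \<le> R"
  proof (cases R)
    case PInf then show ?thesis by simp
  next
    case MInf then show ?thesis using Rpos by simp
  next
    case (real R0)
    have R0: "R0 > 0" using Rpos real by simp
    have nt: "cmod (complex_of_real (R0 / cmod c)) = R0 / cmod c"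
      unfolding norm_of_real using R0 cpos by simp
    have bnd': "cmod c * (R0 / cmod c) < R0" if "complex_of_real (R0 / cmod c) \<in> D"
      using bnd[OF that] unfolding nt real by simp
    from Dcases show ?thesis
    proof
      assume "\<exists>r0>0. r = ereal r0 \<and> D = ball 0 r0"
      then obtain r0 where r0: "r0 > 0" "r = ereal r0" "D = ball 0 r0" by blast
      have "cmod c * r0 \<le> R0"
      proof (rule ccontr)
        assume "\<not> cmod c * r0 \<le> R0"
        then have lt: "R0 / cmod c < r0" using cpos by (simp add: divide_less_eq mult.commute)
        have "complex_of_real (R0 / cmod c) \<in> D" unfolding r0(3) mem_ball dist_0_norm nt using lt .
        from bnd'[OF this] have "cmod c * (R0 / cmod c) < R0" .
        then show False using cpos by simp
      qed
      then show ?thesis using r0 real by simp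
    next
      assume rinf: "r = \<infinity> \<and> D = UNIV"
      have "cmod c * (R0 / cmod c) < R0" using bnd' rinf by simp
      then show ?thesis using cpos by simp
    qed
  qed
  show ?thesis
  proof (intro exI[of _ "ch (-a) (-b) * c"] conjI ballI)
    show "ch (-a) (-b) * c \<noteq> 0" using chnz cnz by simp
    show "ereal (cmod (ch (- a) (- b) * c)) * r \<le> R" using bound by (simp add: norm_mult chn)
    fix p assume p: "p \<in> tube r"
    then have "snd p \<in> D" using tubeD by auto
    from fg_form[OF this, of "fst p"] have "j p = (fst p + lt a b, c * snd p)" using jfg
      by (metis prod.collapse)
    then show "tot_rel w1 w2 u1 u2 (j p) (fst p, ch (- a) (- b) * c * snd p)" unfolding rel
      by (intro exI[of _ "-a"] exI[of _ "-b"]) (simp add: lt_def algebra_simps)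
  qed
qed


end
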